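(* Let $G$ be a finite simple undirected graph with $\alpha(G)=k$. Suppose $\{v_1,\ldots,v_k\}$ is an independent set of $G$ and $S=\{S_1,\ldots,S_k\}$ is a total clique covering of $G$ such that, for each $i=1,\ldots,k$, $S_i$ is the only member of $S$ containing $v_i$. Then $\theta_t(G)=\alpha(G)=k$ and $S$ is the only total clique covering of $G$ consisting of exactly $k$ cliques.
   Context: $\alpha(G)$ is the maximum size of an independent set of $G$. A clique is a set of pairwise adjacent vertices; a set $S$ of cliques of $G$ is a total clique covering if every vertex lies in some member of $S$ and every edge has both endpoints in some member of $S$. $\theta_t(G)$ is the minimum size of a total clique covering of $G$. *)

theory Defs
  imports Main
begin

definition simple_graph :: "'a set \<Rightarrow> ('a \<Rightarrow> 'a \<Rightarrow> bool) \<Rightarrow> bool" where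
  "simple_graph V E \<longleftrightarrow> finite V \<and> (\<forall>x y. E x y \<longrightarrow> x \<in> V \<and> y \<in> V)
     \<and> (\<forall>x y. E x y \<longrightarrow> E y x) \<and> (\<forall>x. \<not> E x x)"

definition independent_set :: "'a set \<Rightarrow> ('a \<Rightarrow> 'a \<Rightarrow> bool) \<Rightarrow> 'a set \<Rightarrow> bool" where
  "independent_set V E I \<longleftrightarrow> I \<subseteq> V \<and> (\<forall>x\<in>I. \<forall>y\<in>I. \<not> E x y)"

definition alpha :: "'a set \<Rightarrow> ('a \<Rightarrow> 'a \<Rightarrow> bool) \<Rightarrow> nat" where
  "alpha V E = Max {card I | I. independent_set V E I}"

definition clique :: "'a set \<Rightarrow> ('a \<Rightarrow> 'a \<Rightarrow> bool) \<Rightarrow> 'a set \<Rightarrow> bool" where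
  "clique V E C \<longleftrightarrow> C \<subseteq> V \<and> (\<forall>x\<in>C. \<forall>y\<in>C. x \<noteq> y \<longrightarrow> E x y)"

definition total_clique_covering :: "'a set \<Rightarrow> ('a \<Rightarrow> 'a \<Rightarrow> bool) \<Rightarrow> 'a set set \<Rightarrow> bool" where
  "total_clique_covering V E S \<longleftrightarrow>
     (\<forall>C\<in>S. clique V E C) \<and> (\<forall>v\<in>V. \<exists>C\<in>S. v \<in> C)
     \<and> (\<forall>x y. E x y \<longrightarrow> (\<exists>C\<in>S. x \<in> C \<and> y \<in> C))"

definition theta_t :: "'a set \<Rightarrow> ('a \<Rightarrow> 'a \<Rightarrow> bool) \<Rightarrow> nat" where
  "theta_t V E = (LEAST n. \<exists>S. total_clique_covering V E S \<and> finite S \<and> card S = n)"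

end

theory Submission
  imports Defs
begin

lemma pick:
  assumes "independent_set V E (v ` {1..k})" "inj_on v {1..k}"
    and "total_clique_covering V E T"
  obtains f where "\<forall>i\<in>{1..k}. f i \<in> T \<and> v i \<in> f i" "inj_on f {1..k}"
proof -
  have "\<forall>i\<in>{1..k}. \<exists>C\<in>T. v i \<in> C"
    using assms unfolding independent_set_def total_clique_covering_def by blast
  define f where "f i = (SOME C. C \<in> T \<and> v i \<in> C)" for i
  have f: "\<forall>i\<in>{1..k}. f i \<in> T \<and> v i \<in> f i"
  proof
    fix i assume "i \<in> {1..k}"
    then have "\<exists>C. C \<in> T \<and> v i \<in> C" using \<open>\<forall>i\<in>{1..k}. \<exists>C\<in>T. v i \<in> C\<close> by blast
    then show "f i \<in> T \<and> v i \<in> f i" unfolding f_def by (rule someI_ex)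
  qed
  have "inj_on f {1..k}"
  proof (rule inj_onI)
    fix i j assume ij: "i \<in> {1..k}" "j \<in> {1..k}" "f i = f j"
    show "i = j"
    proof (rule ccontr)
      assume "i \<noteq> j"
      then have "v i \<noteq> v j" using assms(2) ij unfolding inj_on_def by blast
      moreover have "clique V E (f i)" using f ij assms(3) unfolding total_clique_covering_def by blast
      ultimately have "E (v i) (v j)" using f ij unfolding clique_def by metis
      then show False using assms(1) ij unfolding independent_set_def by blast
    qed
  qed
  then show ?thesis using f that by blast
qed

lemma lower:
  assumes "independent_set V E (v ` {1..k})" "inj_on v {1..k}"
    and "total_clique_covering V E T" "finite T"
  shows "k \<le> card T"
proof -
  obtain f where f: "\<forall>i\<in>{1..k}. f i \<in> T \<and> v i \<in> f i" "inj_on f {1..k}"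
    using pick[OF assms(1-3)] by blast
  have "card (f ` {1..k}) = k" using f(2) by (simp add: card_image)
  moreover have "f ` {1..k} \<subseteq> T" using f(1) by blast
  then have "card (f ` {1..k}) \<le> card T" by (rule card_mono[OF assms(4)])
  ultimately show ?thesis by simp
qed

theorem proposition1:
  fixes V :: "'a set" and E :: "'a \<Rightarrow> 'a \<Rightarrow> bool" and k :: nat
    and v :: "nat \<Rightarrow> 'a" and Sc :: "nat \<Rightarrow> 'a set" and S :: "'a set set"
  assumes "simple_graph V E"
    and "alpha V E = k"
    and "inj_on v {1..k}"
    and "independent_set V E (v ` {1..k})"
    and "S = Sc ` {1..k}"
    and "total_clique_covering V E S"
    and "\<forall>i\<in>{1..k}. \<forall>C\<in>S. v i \<in> C \<longrightarrow> C = Sc i"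
  shows "theta_t V E = alpha V E \<and> alpha V E = k
    \<and> (\<forall>T. total_clique_covering V E T \<and> finite T \<and> card T = k \<longrightarrow> T = S)"
proof -
  have finS: "finite S" using assms(5) by simp
  have cS: "card S = k"
    using lower[OF assms(4,3,6) finS] card_image_le[of "{1..k}" Sc] assms(5) by simp
  have th: "theta_t V E = k"
    unfolding theta_t_def
  proof (rule Least_equality)
    show "\<exists>S. total_clique_covering V E S \<and> finite S \<and> card S = k"
      using assms(6) finS cS by blast
  next
    fix n assume "\<exists>S. total_clique_covering V E S \<and> finite S \<and> card S = n"
    then show "k \<le> n" using lower[OF assms(4,3)] by blast
  qed
  have vin: "\<forall>i\<in>{1..k}. v i \<in> Sc i"
  proof
    fix i assume i: "i \<in> {1..k}"
    have "v i \<in> V" using assms(4) i unfolding independent_set_def by blast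
    then obtain C where "C \<in> S" "v i \<in> C" using assms(6) unfolding total_clique_covering_def by blast
    then show "v i \<in> Sc i" using assms(7) i by blast
  qed
  have uniq: "T = S" if T: "total_clique_covering V E T" "finite T" "card T = k" for T
  proof -
    obtain f where f: "\<forall>i\<in>{1..k}. f i \<in> T \<and> v i \<in> f i" "inj_on f {1..k}"
      using pick[OF assms(4,3) T(1)] by blast
    have "card (f ` {1..k}) = k" using f(2) by (simp add: card_image)
    moreover have sub: "f ` {1..k} \<subseteq> T" using f(1) by blast
    ultimately have Tf: "T = f ` {1..k}" using card_subset_eq[OF T(2) sub] T(3) by simp
    have onlyT: "\<forall>i\<in>{1..k}. \<forall>C\<in>T. v i \<in> C \<longrightarrow> C = f i"
    proof (intro ballI impI)
      fix i C assume i: "i \<in> {1..k}" and C: "C \<in> T" "v i \<in> C"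
      then obtain j where j: "j \<in> {1..k}" "C = f j" using Tf by blast
      show "C = f i"
      proof (rule ccontr)
        assume "C \<noteq> f i"
        then have "i \<noteq> j" using j by blast
        then have "v i \<noteq> v j" using assms(3) i j unfolding inj_on_def by blast
        moreover have "clique V E C" using C T(1) unfolding total_clique_covering_def by blast
        moreover have "v j \<in> C" using f j by blast
        ultimately have "E (v i) (v j)" using C unfolding clique_def by metis
        then show False using assms(4) i j unfolding independent_set_def by blast
      qed
    qed
    have eq: "f i = Sc i" if i: "i \<in> {1..k}" for i
    proof
      show "f i \<subseteq> Sc i"
      proof
        fix x assume x: "x \<in> f i"
        show "x \<in> Sc i"
        proof (cases "x = v i")
          case True then show ?thesis using vin i by blast
        next
          case False
          have "clique V E (f i)" using f i T(1) unfolding total_clique_covering_def by blast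
          then have "E (v i) x" using x f i False unfolding clique_def by metis
          then obtain C where "C \<in> S" "v i \<in> C" "x \<in> C"
            using assms(6) unfolding total_clique_covering_def by blast
          then show ?thesis using assms(7) i by blast
        qed
      qed
    next
      show "Sc i \<subseteq> f i"
      proof
        fix x assume x: "x \<in> Sc i"
        show "x \<in> f i"
        proof (cases "x = v i")
          case True then show ?thesis using f i by blast
        next
          case False
          have "clique V E (Sc i)" using i assms(5,6) unfolding total_clique_covering_def by blast
          then have "E (v i) x" using x vin i False unfolding clique_def by metis
          then obtain C where "C \<in> T" "v i \<in> C" "x \<in> C"
            using T(1) unfolding total_clique_covering_def by blast
          then show ?thesis using onlyT i by blast
        qed
      qed
    qed
    show ?thesis using Tf assms(5) eq by (auto intro: image_cong)
  qed
  show ?thesis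
  proof (intro conjI allI impI)
    show "theta_t V E = alpha V E" using th assms(2) by simp
    show "alpha V E = k" by (rule assms(2))
    fix T assume "total_clique_covering V E T \<and> finite T \<and> card T = k"
    then show "T = S" using uniq by blast
  qed
qed

end
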